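(* Consider one execution of the Modified NCB algorithm with inputs $k$ and $W$, where $\sqrt T\le W\le T$, and assume $968kS\le T$. On the event $E$, every arm $i$ that is pulled at least once in Phase 2 satisfies $$\mu_i\ge\mu^*-4c\sqrt{\frac{\mu^*\log T}{T_i-1}},$$ where $T_i$ is the total number of times arm $i$ is pulled in this execution.
   Context: Bandit setup: $k$ arms, arm $i$ a distribution on $[0,1]$ with mean $\mu_i$, $\mu^*:=\max_i\mu_i>0$. $\log$ is the natural logarithm; $c:=3$; $T$ is the overall horizon and $S:=\frac{c^2\log T}{\mu^*}$. Modified NCB algorithm (inputs $k$, window $W$): maintain counts $n_i$ and empirical means $\widehat\mu_i$ (both initially $0$), round index $t=1$. Phase 1: while $\max_i n_i\widehat\mu_i\le 420c^2\log W$ and $t\le W$, pull a uniformly random arm, update, increment $t$. Phase 2: while $t\le W$, pull an arm maximizing $\overline{\mathrm{NCB}}_i:=\widehat\mu_i+2c\sqrt{2\widehat\mu_i\log W/n_i}$ (ties arbitrary), update, increment $t$. Canonical model: a $k\times T$ table $(Y_{i,s})$ of independent entries with $Y_{i,s}$ distributed as arm $i$, the $s$-th pull of arm $i$ yielding $Y_{i,s}$; $\widehat\mu_{i,s}:=\frac1s\sum_{r=1}^sY_{i,r}$. The uniform choices in Phase 1 are $U_1,U_2,\dots$, independent uniform in $[k]$ (independent of the table). Events: $E_1$: for every integer $r$ with $128kS\le r\le T$ and every arm $i$, the number of $r'\le r$ with $U_{r'}=i$ is at least $\frac{r}{2k}$ and at most $\frac{3r}{2k}$. $E_2$: for every arm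 $i$ with $\mu_i>\frac{\mu^*}{64}$ and every integer $s$ with $64S\le s\le T$, $|\mu_i-\widehat\mu_{i,s}|\le c\sqrt{\frac{\mu_i\log T}{s}}$. $E_3$: for every arm $j$ with $\mu_j\le\frac{\mu^*}{64}$ and every integer $s$ with $64S\le s\le T$, $\widehat\mu_{j,s}<\frac{\mu^*}{32}$. $E:=E_1\cap E_2\cap E_3$. *)

theory Defs
  imports Complex_Main
begin

text \<open>Arms are indexed by 0..k-1. The constant c of the paper is 3.\<close>

definition c_const :: real where "c_const = 3"

definition mu_star :: "nat \<Rightarrow> (nat \<Rightarrow> real) \<Rightarrow> real" where
  "mu_star k \<mu> = Max (\<mu> ` {..<k})"

definition S_val :: "nat \<Rightarrow> real \<Rightarrow> real" where
  "S_val T ms = c_const^2 * ln (real T) / ms"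

text \<open>Empirical mean of the first s entries of row i of the canonical table.\<close>
definition muhat :: "(nat \<Rightarrow> nat \<Rightarrow> real) \<Rightarrow> nat \<Rightarrow> nat \<Rightarrow> real" where
  "muhat Y i s = (\<Sum>r=1..s. Y i r) / real s"

definition event_E1 :: "nat \<Rightarrow> nat \<Rightarrow> real \<Rightarrow> (nat \<Rightarrow> nat) \<Rightarrow> bool" where
  "event_E1 k T S U \<longleftrightarrow>
     (\<forall>r::nat. 128 * real k * S \<le> real r \<and> r \<le> T \<longrightarrow>
        (\<forall>i<k. real r / (2 * real k) \<le> real (card {r'\<in>{1..r}. U r' = i}) \<and>
               real (card {r'\<in>{1..r}. U r' = i}) \<le> 3 * real r / (2 * real k)))"

definition event_E2 :: "nat \<Rightarrow> nat \<Rightarrow> (nat \<Rightarrow> real) \<Rightarrow> (nat \<Rightarrow> nat \<Rightarrow> real) \<Rightarrow> bool" where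
  "event_E2 k T \<mu> Y \<longleftrightarrow>
     (\<forall>i<k. \<mu> i > mu_star k \<mu> / 64 \<longrightarrow>
        (\<forall>s::nat. 64 * S_val T (mu_star k \<mu>) \<le> real s \<and> 1 \<le> s \<and> s \<le> T \<longrightarrow>
           \<bar>\<mu> i - muhat Y i s\<bar> \<le> c_const * sqrt (\<mu> i * ln (real T) / real s)))"

definition event_E3 :: "nat \<Rightarrow> nat \<Rightarrow> (nat \<Rightarrow> real) \<Rightarrow> (nat \<Rightarrow> nat \<Rightarrow> real) \<Rightarrow> bool" where
  "event_E3 k T \<mu> Y \<longleftrightarrow>
     (\<forall>j<k. \<mu> j \<le> mu_star k \<mu> / 64 \<longrightarrow>
        (\<forall>s::nat. 64 * S_val T (mu_star k \<mu>) \<le> real s \<and> 1 \<le> s \<and> s \<le> T \<longrightarrow>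
           muhat Y j s < mu_star k \<mu> / 32))"

definition event_E :: "nat \<Rightarrow> nat \<Rightarrow> (nat \<Rightarrow> real) \<Rightarrow> (nat \<Rightarrow> nat \<Rightarrow> real) \<Rightarrow> (nat \<Rightarrow> nat) \<Rightarrow> bool" where
  "event_E k T \<mu> Y U \<longleftrightarrow>
     event_E1 k T (S_val T (mu_star k \<mu>)) U \<and> event_E2 k T \<mu> Y \<and> event_E3 k T \<mu> Y"

text \<open>Execution of Modified NCB: a t is the arm pulled in round t (t = 1..W).
  State before round t: counts, reward sums (n_i * muhat_i) and empirical means.\<close>

definition pulls :: "(nat \<Rightarrow> nat) \<Rightarrow> nat \<Rightarrow> nat \<Rightarrow> nat" where
  "pulls a i t = card {r\<in>{1..<t}. a r = i}"

definition rsum :: "(nat \<Rightarrow> nat \<Rightarrow> real) \<Rightarrow> (nat \<Rightarrow> nat) \<Rightarrow> nat \<Rightarrow> nat \<Rightarrow> real" where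
  "rsum Y a i t = (\<Sum>s=1..pulls a i t. Y i s)"

definition emp_mean :: "(nat \<Rightarrow> nat \<Rightarrow> real) \<Rightarrow> (nat \<Rightarrow> nat) \<Rightarrow> nat \<Rightarrow> nat \<Rightarrow> real" where
  "emp_mean Y a i t = (if pulls a i t = 0 then 0 else rsum Y a i t / real (pulls a i t))"

definition NCB :: "nat \<Rightarrow> (nat \<Rightarrow> nat \<Rightarrow> real) \<Rightarrow> (nat \<Rightarrow> nat) \<Rightarrow> nat \<Rightarrow> nat \<Rightarrow> real" where
  "NCB W Y a i t = emp_mean Y a i t +
     2 * c_const * sqrt (2 * emp_mean Y a i t * ln (real W) / real (pulls a i t))"

definition phase1_cond :: "nat \<Rightarrow> nat \<Rightarrow> (nat \<Rightarrow> nat \<Rightarrow> real) \<Rightarrow> (nat \<Rightarrow> nat) \<Rightarrow> nat \<Rightarrow> bool" where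
  "phase1_cond k W Y a t \<longleftrightarrow> (\<forall>i<k. rsum Y a i t \<le> 420 * c_const^2 * ln (real W))"

definition in_phase1 :: "nat \<Rightarrow> nat \<Rightarrow> (nat \<Rightarrow> nat \<Rightarrow> real) \<Rightarrow> (nat \<Rightarrow> nat) \<Rightarrow> nat \<Rightarrow> bool" where
  "in_phase1 k W Y a t \<longleftrightarrow> (\<forall>r\<in>{1..t}. phase1_cond k W Y a r)"

text \<open>Valid execution: Phase-1 rounds pull U t; Phase-2 rounds pull a maximizer of the NCB index,
  where an arm with n_i = 0 is regarded as having index +infinity (ties arbitrary).\<close>
definition is_execution :: "nat \<Rightarrow> nat \<Rightarrow> (nat \<Rightarrow> nat) \<Rightarrow> (nat \<Rightarrow> nat \<Rightarrow> real) \<Rightarrow> (nat \<Rightarrow> nat) \<Rightarrow> bool" where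
  "is_execution k W U Y a \<longleftrightarrow>
     (\<forall>t\<in>{1..W}. a t < k \<and>
        (if in_phase1 k W Y a t then a t = U t
         else (pulls a (a t) t = 0 \<or>
               (\<forall>j<k. 0 < pulls a j t \<and> NCB W Y a j t \<le> NCB W Y a (a t) t))))"

definition total_pulls :: "nat \<Rightarrow> (nat \<Rightarrow> nat) \<Rightarrow> nat \<Rightarrow> nat" where
  "total_pulls W a i = card {t\<in>{1..W}. a t = i}"

definition pulled_in_phase2 :: "nat \<Rightarrow> nat \<Rightarrow> (nat \<Rightarrow> nat \<Rightarrow> real) \<Rightarrow> (nat \<Rightarrow> nat) \<Rightarrow> nat \<Rightarrow> bool" where
  "pulled_in_phase2 k W Y a i \<longleftrightarrow> (\<exists>t\<in>{1..W}. \<not> in_phase1 k W Y a t \<and> a t = i)"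

end

theory Submission imports Defs begin
lemma sqrt_scale: "0 \<le> (a::real) \<Longrightarrow> a * sqrt x = sqrt (a^2 * x)"
  by (simp add: real_sqrt_mult)

lemma eps_small:
  fixes ms L m :: real
  assumes "ms > 0" "L \<ge> 0" "m > 0" "576 * L / ms \<le> m"
  shows "3 * sqrt (ms * L / m) \<le> ms / 8"
proof -
  have "576 * L \<le> m * ms" using assms by (simp add: field_simps)
  hence "9 * (ms * L / m) \<le> (ms/8)^2" using assms by (simp add: field_simps power2_eq_square)
  hence "sqrt (9 * (ms * L / m)) \<le> ms/8" using assms by (intro real_le_lsqrt) auto
  thus ?thesis by (simp add: sqrt_scale)
qed

lemma ncb_lower:
  fixes ms L lW m h :: real
  assumes "ms > 0" "L \<ge> 0" "m > 0" "576 * L / ms \<le> m" "lW \<ge> L / 2"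
    and "\<bar>ms - h\<bar> \<le> 3 * sqrt (ms * L / m)"
  shows "ms \<le> h + 2 * 3 * sqrt (2 * h * lW / m)"
proof -
  have e: "3 * sqrt (ms * L / m) \<le> ms / 8" using eps_small assms by blast
  hence h: "h \<ge> 7 * ms / 8" using assms(6) by linarith
  have "9 * (ms * L / m) \<le> 36 * (2 * h * lW / m)"
  proof -
    have "9 * ms * L \<le> 72 * h * lW"
    proof -
      have "9 * ms * L \<le> 72 * (7*ms/8) * (L/2)" using assms by (simp add: mult_right_mono)
      also have "\<dots> \<le> 72 * h * lW" using h assms by (intro mult_mono) auto
      finally show ?thesis .
    qed
    thus ?thesis using assms by (simp add: field_simps)
  qed
  hence "sqrt (9 * (ms * L / m)) \<le> sqrt (36 * (2 * h * lW / m))" by simp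
  hence "3 * sqrt (ms * L / m) \<le> 6 * sqrt (2 * h * lW / m)" by (simp add: sqrt_scale)
  thus ?thesis using assms(6) by linarith
qed

lemma ncb_upper:
  fixes ms L lW n h mu :: real
  assumes "ms > 0" "L \<ge> 0" "n > 0" "576 * L / ms \<le> n" "lW \<le> L" "lW \<ge> 0" "h \<ge> 0"
    and "0 \<le> mu" "mu \<le> ms"
    and "h \<le> mu + 3 * sqrt (mu * L / n)"
  shows "h + 2 * 3 * sqrt (2 * h * lW / n) \<le> mu + 4 * 3 * sqrt (ms * L / n)"
proof -
  have e: "3 * sqrt (ms * L / n) \<le> ms / 8" using eps_small assms by blast
  have m: "sqrt (mu * L / n) \<le> sqrt (ms * L / n)" using assms
    by (simp add: divide_right_mono mult_right_mono)
  have h: "h \<le> 9 * ms / 8" using e m assms(10) assms(9) by linarith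
  have "2 * h * lW / n \<le> 2 * (9 * ms / 8) * L / n"
    using h assms by (intro divide_right_mono mult_mono) auto
  also have "2 * (9 * ms / 8) * L / n = 9/4 * (ms * L / n)" by simp
  finally have "36 * (2 * h * lW / n) \<le> 36 * (9/4 * (ms * L / n))" by (rule mult_left_mono) simp
  hence "36 * (2 * h * lW / n) \<le> 81 * (ms * L / n)" by (simp add: mult.commute)
  hence "sqrt (36 * (2 * h * lW / n)) \<le> sqrt (81 * (ms * L / n))" by simp
  hence "6 * sqrt (2 * h * lW / n) \<le> 9 * sqrt (ms * L / n)" by (simp add: sqrt_scale)
  thus ?thesis using m assms(10) by linarith
qed

lemma ncb_upper3:
  fixes ms L lW n h :: real
  assumes "ms > 0" "L \<ge> 0" "n > 0" "576 * L / ms \<le> n" "lW \<le> L" "lW \<ge> 0" "h \<ge> 0"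
    and "h < ms / 32"
  shows "h + 2 * 3 * sqrt (2 * h * lW / n) < ms"
proof -
  have e: "3 * sqrt (ms * L / n) \<le> ms / 8" using eps_small assms by blast
  have "2 * h * lW / n \<le> 2 * (ms / 32) * L / n"
    using assms by (intro divide_right_mono mult_mono) auto
  also have "2 * (ms / 32) * L / n = 1/16 * (ms * L / n)" by simp
  finally have "36 * (2 * h * lW / n) \<le> (3/2)^2 * (ms * L / n)" by (simp add: power2_eq_square)
  hence "sqrt (6^2 * (2 * h * lW / n)) \<le> sqrt ((3/2)^2 * (ms * L / n))" by simp
  hence "6 * sqrt (2 * h * lW / n) \<le> 3/2 * sqrt (ms * L / n)" by (simp only: sqrt_scale[symmetric])
  thus ?thesis using e assms by linarith
qed

lemma phase1_bound:
  fixes ms L m mu :: real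
  assumes "ms > 0" "ms \<le> 1" "L \<ge> 1" "m > 0" "m \<le> 192 * (9 * L / ms) + 2"
    "0 \<le> mu" "mu \<le> ms"
  shows "m * mu + m * (3 * sqrt (mu * L / m)) \<le> 1890 * L"
proof -
  have mm: "m * ms \<le> 1728 * L + 2"
  proof -
    have "m * ms \<le> (192 * (9 * L / ms) + 2) * ms" using assms by (intro mult_right_mono) auto
    also have "\<dots> = 1728 * L + 2 * ms" using assms by (simp add: field_simps)
    finally show ?thesis using assms by linarith
  qed
  have a: "m * mu \<le> m * ms" using assms by (intro mult_left_mono) auto
  have "(3*m)^2 * (mu * L / m) = 9 * (m * mu) * L" using assms by (simp add: power2_eq_square field_simps)
  also have "\<dots> \<le> 9 * (1728 * L + 2) * L" using a mm assms by (intro mult_right_mono mult_left_mono) linarith+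
  also have "\<dots> \<le> (125 * L)^2" using assms by (simp add: power2_eq_square algebra_simps)
  finally have "sqrt ((3*m)^2 * (mu * L / m)) \<le> 125 * L" using assms by (intro real_le_lsqrt) auto
  moreover have "sqrt ((3*m)^2 * (mu * L / m)) = m * (3 * sqrt (mu * L / m))"
    using assms by (subst sqrt_scale[symmetric]) auto
  ultimately have "m * (3 * sqrt (mu * L / m)) \<le> 125 * L" by simp
  thus ?thesis using a mm assms by linarith
qed

lemma in_phase1_mono: "in_phase1 k W Y a t \<Longrightarrow> s \<le> t \<Longrightarrow> in_phase1 k W Y a s"
  unfolding in_phase1_def by auto

lemma pulls_mono: "t \<le> t' \<Longrightarrow> pulls a j t \<le> pulls a j t'"
  unfolding pulls_def by (intro card_mono) auto

lemma pulls_le: "pulls a j t \<le> t - 1"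
proof -
  have "pulls a j t \<le> card {1..<t}" unfolding pulls_def by (intro card_mono) auto
  thus ?thesis by simp
qed

lemma sum_eq_muhat: "0 < s \<Longrightarrow> (\<Sum>r=1..s. Y i r) = real s * muhat Y i s"
  unfolding muhat_def by simp

lemma sum_mono_upto:
  fixes Y :: "nat \<Rightarrow> nat \<Rightarrow> real"
  assumes "\<forall>s. 0 \<le> Y i s" "n \<le> m"
  shows "(\<Sum>r=1..n. Y i r) \<le> (\<Sum>r=1..m. Y i r)"
  using assms by (rule_tac sum_mono2) auto

theorem lemma11:
  fixes k W T :: nat and \<mu> :: "nat \<Rightarrow> real" and Y :: "nat \<Rightarrow> nat \<Rightarrow> real"
    and U :: "nat \<Rightarrow> nat" and a :: "nat \<Rightarrow> nat"
  assumes k_pos: "0 < k" and T_pos: "1 \<le> T"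
    and mu_range: "\<forall>i<k. 0 \<le> \<mu> i \<and> \<mu> i \<le> 1"
    and mu_star_pos: "mu_star k \<mu> > 0"
    and Y_range: "\<forall>i<k. \<forall>s. 0 \<le> Y i s \<and> Y i s \<le> 1"
    and U_range: "\<forall>t. U t < k"
    and W_lo: "sqrt (real T) \<le> real W" and W_hi: "W \<le> T"
    and T_big: "968 * real k * S_val T (mu_star k \<mu>) \<le> real T"
    and exec: "is_execution k W U Y a"
    and evE: "event_E k T \<mu> Y U"
  shows "\<forall>i<k. pulled_in_phase2 k W Y a i \<and> 2 \<le> total_pulls W a i \<longrightarrow>
           \<mu> i \<ge> mu_star k \<mu> - 4 * c_const *
              sqrt (mu_star k \<mu> * ln (real T) / (real (total_pulls W a i) - 1))"
proof (intro allI impI)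
  fix i assume ik: "i < k" and hyp: "pulled_in_phase2 k W Y a i \<and> 2 \<le> total_pulls W a i"
  define ms where "ms = mu_star k \<mu>"
  define L where "L = ln (real T)"
  define S where "S = 9 * L / ms"
  have S_eq: "S_val T (mu_star k \<mu>) = S" unfolding S_def S_val_def c_const_def ms_def L_def by simp
  have ms_pos: "ms > 0" using mu_star_pos ms_def by simp
  have fin: "finite (\<mu> ` {..<k})" and ne: "\<mu> ` {..<k} \<noteq> {}" using k_pos by auto
  have mu_le: "\<And>j. j < k \<Longrightarrow> \<mu> j \<le> ms" unfolding ms_def mu_star_def using fin by auto
  obtain js where js: "js < k" "\<mu> js = ms"
    using Max_in[OF fin ne] unfolding ms_def mu_star_def by auto
  have ms_le1: "ms \<le> 1" using js mu_range by auto
  have E1: "\<And>r j. 128 * real k * S \<le> real r \<Longrightarrow> r \<le> T \<Longrightarrow> j < k \<Longrightarrow>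
      real r / (2 * real k) \<le> real (card {r'\<in>{1..r}. U r' = j}) \<and>
      real (card {r'\<in>{1..r}. U r' = j}) \<le> 3 * real r / (2 * real k)"
    using evE S_eq unfolding event_E_def event_E1_def by auto
  have E2: "\<And>j s. j < k \<Longrightarrow> \<mu> j > ms / 64 \<Longrightarrow> 64 * S \<le> real s \<Longrightarrow> 1 \<le> s \<Longrightarrow> s \<le> T \<Longrightarrow>
      \<bar>\<mu> j - muhat Y j s\<bar> \<le> 3 * sqrt (\<mu> j * L / real s)"
    using evE S_eq unfolding event_E_def event_E2_def ms_def L_def c_const_def by auto
  have E3: "\<And>j s. j < k \<Longrightarrow> \<mu> j \<le> ms / 64 \<Longrightarrow> 64 * S \<le> real s \<Longrightarrow> 1 \<le> s \<Longrightarrow> s \<le> T \<Longrightarrow>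
      muhat Y j s < ms / 32"
    using evE S_eq unfolding event_E_def event_E3_def ms_def by auto

  have Wpos: "W \<ge> 1"
  proof -
    have "sqrt (real T) \<ge> 1" using T_pos by simp
    thus ?thesis using W_lo by linarith
  qed
  have tp_le: "total_pulls W a i \<le> W"
  proof -
    have "total_pulls W a i \<le> card {1..W}" unfolding total_pulls_def by (intro card_mono) auto
    thus ?thesis by simp
  qed
  have T2: "T \<ge> 2" using hyp tp_le W_hi by linarith
  have L_pos: "L \<ge> 1/2"
  proof -
    have "1/2 \<le> ln (1 + (1::real))" using ln_add1_ge[of 1] by (simp add: add.commute)
    also have "\<dots> \<le> L" unfolding L_def using T2 by (intro ln_mono) auto
    finally show ?thesis by simp
  qed
  have S_ge: "S \<ge> 9 * L"
  proof -
    have "9 * L / 1 \<le> 9 * L / ms" using ms_pos ms_le1 L_pos by (intro divide_left_mono) auto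
    thus ?thesis unfolding S_def by simp
  qed
  have kS: "real k * S \<ge> S" using k_pos S_ge L_pos by (simp add: mult_le_cancel_right1)
  have T_big': "968 * (real k * S) \<le> real T" using T_big S_eq by simp
  have L1: "L \<ge> 1"
  proof -
    have "real T \<ge> 3" using T_big' kS S_ge L_pos by linarith
    have "exp 1 \<le> real T" using exp_le \<open>real T \<ge> 3\<close> by linarith
    thus ?thesis unfolding L_def using T2 by (subst ln_ge_iff) auto
  qed
  have lnW_lo: "ln (real W) \<ge> L / 2"
  proof -
    have "L / 2 = ln (sqrt (real T))" unfolding L_def by (simp add: ln_sqrt)
    also have "\<dots> \<le> ln (real W)" using W_lo T2 by (intro ln_mono) auto
    finally show ?thesis .
  qed
  have lnW_hi: "ln (real W) \<le> L" unfolding L_def using W_hi Wpos by (intro ln_mono) auto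
  have lnW_nn: "ln (real W) \<ge> 0" using Wpos by simp
  have Ynn: "\<And>j. j < k \<Longrightarrow> \<forall>s. 0 \<le> Y j s" using Y_range by auto
  have muhat_nn: "\<And>j s. j < k \<Longrightarrow> muhat Y j s \<ge> 0"
    unfolding muhat_def using Ynn by (intro divide_nonneg_nonneg sum_nonneg) auto
  obtain t' where t': "t' \<in> {1..W}" "\<not> in_phase1 k W Y a t'" "a t' = i"
    using hyp unfolding pulled_in_phase2_def by auto
  define t1 where "t1 = (LEAST t. \<not> in_phase1 k W Y a t)"
  have t1_not: "\<not> in_phase1 k W Y a t1" unfolding t1_def using t'(2) by (rule LeastI)
  have t1_le: "\<And>t. \<not> in_phase1 k W Y a t \<Longrightarrow> t1 \<le> t" unfolding t1_def by (rule Least_le)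
  have before: "\<And>r. r < t1 \<Longrightarrow> in_phase1 k W Y a r" using t1_le not_le by blast
  have t1_W: "t1 \<le> W" using t1_le[OF t'(2)] t' by auto
  have t1_pos: "t1 \<ge> 1"
  proof (rule ccontr)
    assume "\<not> 1 \<le> t1" hence "t1 = 0" by simp
    thus False using t1_not unfolding in_phase1_def by simp
  qed
  have aU: "\<And>r. r \<in> {1..<t1} \<Longrightarrow> a r = U r"
  proof -
    fix r assume r: "r \<in> {1..<t1}"
    hence "r \<in> {1..W}" using t1_W by auto
    moreover have "in_phase1 k W Y a r" using before r by auto
    ultimately show "a r = U r" using exec unfolding is_execution_def by auto
  qed
  define R where "R = t1 - 1"
  have pulls_t1: "\<And>j. pulls a j t1 = card {r'\<in>{1..R}. U r' = j}"
  proof -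
    fix j
    have "{r\<in>{1..<t1}. a r = j} = {r'\<in>{1..R}. U r' = j}"
      using aU t1_pos unfolding R_def by auto
    thus "pulls a j t1 = card {r'\<in>{1..R}. U r' = j}" unfolding pulls_def by simp
  qed
  obtain jb where jb: "jb < k" "rsum Y a jb t1 > 420 * 9 * ln (real W)"
  proof -
    obtain r where r: "r \<in> {1..t1}" "\<not> phase1_cond k W Y a r"
      using t1_not unfolding in_phase1_def by auto
    have "r = t1"
    proof (rule ccontr)
      assume "r \<noteq> t1" hence "r < t1" using r by auto
      hence "in_phase1 k W Y a r" by (rule before)
      thus False using r unfolding in_phase1_def by auto
    qed
    thus ?thesis using r that unfolding phase1_cond_def c_const_def by force
  qed
  have R_big: "128 * real k * S \<le> real R"
  proof (rule ccontr)
    assume "\<not> ?thesis" hence Rs: "real R < 128 * real k * S" by simp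
    define r0 where "r0 = nat \<lceil>128 * real k * S\<rceil>"
    have r0_lo: "128 * real k * S \<le> real r0" unfolding r0_def by linarith
    have r0_hi: "real r0 < 128 * real k * S + 1" unfolding r0_def
      using S_ge L1 ceiling_correct[of "128 * real k * S"] by (simp add: of_nat_nat)
    have r0T: "r0 \<le> T" using r0_hi T_big' kS S_ge L1 by simp
    have Rr0: "R \<le> r0" using Rs r0_lo by simp
    define n where "n = pulls a jb t1"
    have "real n \<le> real (card {r'\<in>{1..r0}. U r' = jb})"
      unfolding n_def pulls_t1 using Rr0 by (simp add: card_mono subset_iff)
    also have "\<dots> \<le> 3 * real r0 / (2 * real k)" using E1[OF r0_lo r0T jb(1)] by simp
    also have "\<dots> \<le> 3 * (128 * real k * S + 1) / (2 * real k)"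
      using r0_hi k_pos by (intro divide_right_mono) auto
    also have "\<dots> = 192 * S + 3 / (2 * real k)" using k_pos by (simp add: field_simps)
    also have "\<dots> \<le> 192 * S + 3 / 2" using k_pos by (simp add: field_simps)
    finally have n_le: "real n \<le> 192 * S + 3/2" .
    define m where "m = max n (nat \<lceil>64 * S\<rceil>)"
    have m_lo: "64 * S \<le> real m" unfolding m_def by linarith
    have m_hi: "real m \<le> 192 * S + 2" unfolding m_def using n_le S_ge L1 ceiling_correct[of "64 * S"]
      by (simp add: of_nat_nat)
    have m_pos: "1 \<le> m" using m_lo S_ge L1 by simp
    have "real m \<le> real T" using m_hi T_big' kS S_ge L1 by linarith
    hence mT: "m \<le> T" by simp
    have "rsum Y a jb t1 \<le> (\<Sum>r=1..m. Y jb r)"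
      unfolding rsum_def n_def[symmetric] m_def using Ynn[OF jb(1)] by (intro sum_mono_upto) auto
    also have "\<dots> = real m * muhat Y jb m" using m_pos by (intro sum_eq_muhat) simp
    also have "\<dots> \<le> 1890 * L"
    proof (cases "\<mu> jb > ms / 64")
      case True
      have "muhat Y jb m \<le> \<mu> jb + 3 * sqrt (\<mu> jb * L / real m)"
        using E2[OF jb(1) True m_lo m_pos mT] by linarith
      hence "real m * muhat Y jb m \<le> real m * \<mu> jb + real m * (3 * sqrt (\<mu> jb * L / real m))"
        using m_pos by (simp add: distrib_left[symmetric] mult_left_mono)
      also have "\<dots> \<le> 1890 * L"
        using phase1_bound[OF ms_pos ms_le1 L1, of "real m" "\<mu> jb"] m_pos m_hi S_def
          mu_range jb(1) mu_le by simp
      finally show ?thesis .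
    next
      case False
      have "muhat Y jb m < ms / 32" using E3[OF jb(1) _ m_lo m_pos mT] False by simp
      hence "real m * muhat Y jb m \<le> real m * (ms / 32)" using m_pos by simp
      also have "\<dots> \<le> (192 * S + 2) * ms / 32" using m_hi ms_pos
        by (simp add: mult_right_mono)
      also have "\<dots> = (1728 * L + 2 * ms) / 32" using ms_pos unfolding S_def by (simp add: field_simps)
      also have "\<dots> \<le> 1890 * L" using ms_le1 L1 by simp
      finally show ?thesis .
    qed
    also have "\<dots> \<le> 420 * 9 * ln (real W)" using lnW_lo by simp
    finally show False using jb(2) by simp
  qed

  have R_T: "R \<le> T" using t1_W W_hi unfolding R_def by simp
  have pulls_t1_lo: "\<And>j. j < k \<Longrightarrow> 64 * S \<le> real (pulls a j t1)"
  proof -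
    fix j assume j: "j < k"
    have "64 * S = 128 * real k * S / (2 * real k)" using k_pos by simp
    also have "\<dots> \<le> real R / (2 * real k)" using R_big k_pos by (intro divide_right_mono) auto
    also have "\<dots> \<le> real (pulls a j t1)" using E1[OF R_big R_T j] pulls_t1 by simp
    finally show "64 * S \<le> real (pulls a j t1)" .
  qed
  define Pi where "Pi = {t\<in>{1..W}. a t = i}"
  have Pi_fin: "finite Pi" unfolding Pi_def by simp
  have t'Pi: "t' \<in> Pi" using t' unfolding Pi_def by simp
  define tl where "tl = Max Pi"
  have tl_in: "tl \<in> Pi" unfolding tl_def using Pi_fin t'Pi by (intro Max_in) auto
  have tl_ge: "\<And>x. x \<in> Pi \<Longrightarrow> x \<le> tl" unfolding tl_def using Pi_fin by simp
  have tl_not: "\<not> in_phase1 k W Y a tl" using t'(2) tl_ge[OF t'Pi] in_phase1_mono by blast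
  have tl_W: "tl \<in> {1..W}" "a tl = i" using tl_in unfolding Pi_def by auto
  have t1_tl: "t1 \<le> tl" using t1_le[OF tl_not] .
  have Pi_split: "Pi = insert tl {r\<in>{1..<tl}. a r = i}"
  proof
    show "Pi \<subseteq> insert tl {r \<in> {1..<tl}. a r = i}"
      using tl_ge unfolding Pi_def by (auto simp: le_less)
    show "insert tl {r \<in> {1..<tl}. a r = i} \<subseteq> Pi"
      using tl_in tl_W unfolding Pi_def by auto
  qed
  have tp: "total_pulls W a i = pulls a i tl + 1"
  proof -
    have "total_pulls W a i = card Pi" unfolding total_pulls_def Pi_def by simp
    also have "\<dots> = card {r\<in>{1..<tl}. a r = i} + 1" unfolding Pi_split by simp
    finally show ?thesis unfolding pulls_def .
  qed
  have ni_pos: "pulls a i tl \<noteq> 0" using tp hyp by simp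
  have ncb: "\<forall>j<k. 0 < pulls a j tl \<and> NCB W Y a j tl \<le> NCB W Y a i tl"
  proof -
    have "tl \<in> {1..W}" using tl_W by simp
    hence "if in_phase1 k W Y a tl then a tl = U tl
         else (pulls a (a tl) tl = 0 \<or>
               (\<forall>j<k. 0 < pulls a j tl \<and> NCB W Y a j tl \<le> NCB W Y a (a tl) tl))"
      using exec unfolding is_execution_def by blast
    thus ?thesis using tl_not ni_pos tl_W(2) by simp
  qed
  have pl: "\<And>j. j < k \<Longrightarrow> 64 * S \<le> real (pulls a j tl)"
    using pulls_t1_lo pulls_mono[OF t1_tl] by (meson of_nat_le_iff order_trans)
  have pT: "\<And>j. pulls a j tl \<le> T" using pulls_le[of a _ tl] tl_W W_hi by (meson atLeastAtMost_iff diff_le_self le_trans)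
  have ppos: "\<And>j. j < k \<Longrightarrow> 1 \<le> pulls a j tl" using ncb by (simp add: Suc_le_eq)
  have ncb_eq: "\<And>j. j < k \<Longrightarrow> NCB W Y a j tl = muhat Y j (pulls a j tl) +
      2 * 3 * sqrt (2 * muhat Y j (pulls a j tl) * ln (real W) / real (pulls a j tl))"
    using ppos unfolding NCB_def emp_mean_def rsum_def muhat_def c_const_def by auto
  have S64: "64 * S = 576 * L / ms" unfolding S_def by simp
  have Lnn: "L \<ge> 0" using L1 by simp
  define pj where "pj = pulls a js tl"
  define pi where "pi = pulls a i tl"
  have low: "ms \<le> NCB W Y a js tl"
  proof -
    have "\<bar>ms - muhat Y js pj\<bar> \<le> 3 * sqrt (ms * L / real pj)"
      using E2[OF js(1) _ pl[OF js(1)] ppos[OF js(1)] pT] js ms_pos unfolding pj_def by simp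
    thus ?thesis unfolding ncb_eq[OF js(1)] pj_def[symmetric]
      using ncb_lower[OF ms_pos Lnn _ _ lnW_lo] ppos[OF js(1)] pl[OF js(1)] S64 pj_def by simp
  qed
  have hi_le: "NCB W Y a js tl \<le> NCB W Y a i tl" using ncb js(1) by blast
  show "\<mu> i \<ge> mu_star k \<mu> - 4 * c_const *
              sqrt (mu_star k \<mu> * ln (real T) / (real (total_pulls W a i) - 1))"
  proof (cases "\<mu> i > ms / 64")
    case True
    have "muhat Y i pi \<le> \<mu> i + 3 * sqrt (\<mu> i * L / real pi)"
      using E2[OF ik True pl[OF ik] ppos[OF ik] pT] unfolding pi_def by linarith
    hence "NCB W Y a i tl \<le> \<mu> i + 4 * 3 * sqrt (ms * L / real pi)"
      unfolding ncb_eq[OF ik] pi_def[symmetric]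
      using ncb_upper[OF ms_pos Lnn _ _ lnW_hi lnW_nn] ppos[OF ik] pl[OF ik] S64 pi_def
        muhat_nn[OF ik] mu_range ik mu_le[OF ik] by simp
    moreover have "real (total_pulls W a i) - 1 = real pi" using tp pi_def by simp
    ultimately show ?thesis using low hi_le unfolding ms_def L_def c_const_def by simp
  next
    case False
    have "muhat Y i pi < ms / 32" using E3[OF ik _ pl[OF ik] ppos[OF ik] pT] False pi_def by simp
    hence "NCB W Y a i tl < ms"
      unfolding ncb_eq[OF ik] pi_def[symmetric]
      using ncb_upper3[OF ms_pos Lnn _ _ lnW_hi lnW_nn] ppos[OF ik] pl[OF ik] S64 pi_def
        muhat_nn[OF ik] by simp
    thus ?thesis using low hi_le by simp
  qed
qed
end
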